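(* Let $A\in\mathbb{C}^{n\times n}$, $B\in\mathbb{C}^{n\times m}$, $C\in\mathbb{C}^{p\times n}$, $D\in\mathbb{C}^{p\times m}$, $F\in\mathbb{C}^{\nu\times\nu}$ with $\mathrm{eig}(A)\cap\mathrm{eig}(F)=\emptyset$, and let $H\in\mathbb{C}^{m\times\nu}$ be such that $(F,H)$ is observable. Let $\hat B\in\mathbb{C}^{\nu\times m}$ and $\hat D\in\mathbb{C}^{p\times m}$, and define $\hat A=F-\hat BH$ and $\hat C=\mathcal{C}_{\rm p}(H)-\hat DH$. Suppose $\mathrm{eig}(\hat A)\cap\mathrm{eig}(F)=\emptyset$ and that the matrix $$\begin{bmatrix}F-\lambda I_\nu & \hat B\\ \mathcal{C}_{\rm p}(H) & \hat D\end{bmatrix}$$ has full column rank for every $\lambda\in\mathrm{eig}(\hat A)$. Then the pair $(\hat A,\hat C)$ is observable.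
   Context: The primal SSC operator: for $H\in\mathbb{C}^{m\times\nu}$, $\mathcal{C}_{\rm p}(H)=C\Pi+DH$, where $\Pi\in\mathbb{C}^{n\times\nu}$ is the unique solution of $\Pi F-A\Pi=BH$. *)

theory Defs
  imports "Jordan_Normal_Form.Spectral_Radius" "Jordan_Normal_Form.DL_Rank"
begin

definition full_col_rank :: "complex mat \<Rightarrow> bool" where
  "full_col_rank M \<longleftrightarrow> vec_space.rank (dim_row M) M = dim_col M"

fun obs_stack :: "complex mat \<Rightarrow> complex mat \<Rightarrow> nat \<Rightarrow> complex mat" where
  "obs_stack A C 0 = C"
| "obs_stack A C (Suc k) = obs_stack A C k @\<^sub>r (C * A ^\<^sub>m Suc k)"

definition obs_matrix :: "complex mat \<Rightarrow> complex mat \<Rightarrow> complex mat" where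
  "obs_matrix A C = obs_stack A C (dim_row A - 1)"

definition observable :: "complex mat \<Rightarrow> complex mat \<Rightarrow> bool" where
  "observable A C \<longleftrightarrow> A \<in> carrier_mat (dim_row A) (dim_row A) \<and> dim_col C = dim_row A
     \<and> vec_space.rank (dim_row (obs_matrix A C)) (obs_matrix A C) = dim_row A"

definition sylv_Pi :: "complex mat \<Rightarrow> complex mat \<Rightarrow> complex mat \<Rightarrow> complex mat \<Rightarrow> complex mat" where
  "sylv_Pi A B F H = (THE Pi. Pi \<in> carrier_mat (dim_row A) (dim_row F) \<and> Pi * F - A * Pi = B * H)"

(* primal SSC operator C_p(H) = C Pi + D H *)
definition primal_ssc :: "complex mat \<Rightarrow> complex mat \<Rightarrow> complex mat \<Rightarrow> complex mat \<Rightarrow> complex mat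
    \<Rightarrow> complex mat \<Rightarrow> complex mat" where
  "primal_ssc A B C D F H = C * sylv_Pi A B F H + D * H"

end

theory Submission
  imports Defs
begin

definition Ev :: "complex mat \<Rightarrow> complex poly \<Rightarrow> complex vec \<Rightarrow> complex vec" where
  "Ev A p w = fold_coeffs (\<lambda>a x. a \<cdot>\<^sub>v w + A *\<^sub>v x) p (0\<^sub>v (dim_row A))"

lemma Ev_0[simp]: "Ev A 0 w = 0\<^sub>v (dim_row A)"
  unfolding Ev_def by simp

lemma Ev_pCons:
  assumes A: "A \<in> carrier_mat n n" and w: "w \<in> carrier_vec n"
  shows "Ev A (pCons a p) w = a \<cdot>\<^sub>v w + A *\<^sub>v Ev A p w"
proof (cases "p = 0")
  case True
  show ?thesis
  proof (cases "a = 0")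
    case True
    with \<open>p = 0\<close> show ?thesis using A w by (auto intro!: eq_vecI)
  next
    case False
    with \<open>p = 0\<close> show ?thesis unfolding Ev_def by (simp add: fold_coeffs_pCons_coeff_not_0_eq)
  qed
next
  case False
  then show ?thesis unfolding Ev_def by (simp add: fold_coeffs_pCons_not_0_0_eq)
qed

lemma Ev_carrier:
  assumes A: "A \<in> carrier_mat n n" and w: "w \<in> carrier_vec n"
  shows "Ev A p w \<in> carrier_vec n"
  by (induct p rule: pCons_induct) (use A w in \<open>auto simp: Ev_pCons[OF A w]\<close>)

lemma Ev_add:
  assumes A: "A \<in> carrier_mat n n" and w: "w \<in> carrier_vec n"
  shows "Ev A (p + q) w = Ev A p w + Ev A q w"
proof (induct p q rule: poly_induct2)
  show "Ev A (0 + 0) w = Ev A 0 w + Ev A 0 w" using A by (auto intro!: eq_vecI)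
next
  fix a p b q
  assume IH: "Ev A (p + q) w = Ev A p w + Ev A q w"
  have c1: "Ev A p w \<in> carrier_vec n" "Ev A q w \<in> carrier_vec n" using Ev_carrier[OF A w] by auto
  show "Ev A (pCons a p + pCons b q) w = Ev A (pCons a p) w + Ev A (pCons b q) w"
    unfolding add_pCons Ev_pCons[OF A w] IH mult_add_distrib_mat_vec[OF A c1]
    by (rule eq_vecI) (use A w c1 in \<open>auto simp: distrib_right\<close>)
qed

lemma Ev_smult:
  assumes A: "A \<in> carrier_mat n n" and w: "w \<in> carrier_vec n"
  shows "Ev A (Polynomial.smult c p) w = c \<cdot>\<^sub>v Ev A p w"
proof (induct p rule: pCons_induct)
  show "Ev A (Polynomial.smult c 0) w = c \<cdot>\<^sub>v Ev A 0 w" using A by (auto intro!: eq_vecI)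
next
  fix a p
  assume IH: "Ev A (Polynomial.smult c p) w = c \<cdot>\<^sub>v Ev A p w"
  have c1: "Ev A p w \<in> carrier_vec n" using Ev_carrier[OF A w] by auto
  show "Ev A (Polynomial.smult c (pCons a p)) w = c \<cdot>\<^sub>v Ev A (pCons a p) w"
    unfolding smult_pCons Ev_pCons[OF A w] IH mult_mat_vec[OF A c1]
    by (rule eq_vecI) (use A w c1 in \<open>auto simp: distrib_left mult.assoc\<close>)
qed

lemma smult_one_mult_vec:
  assumes x: "(x :: complex vec) \<in> carrier_vec n"
  shows "(r \<cdot>\<^sub>m 1\<^sub>m n) *\<^sub>v x = r \<cdot>\<^sub>v x"
proof (rule eq_vecI)
  fix i assume "i < dim_vec (r \<cdot>\<^sub>v x)"
  then have i: "i < n" using x by simp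
  have "row (r \<cdot>\<^sub>m 1\<^sub>m n) i = r \<cdot>\<^sub>v unit_vec n i" using i by (intro eq_vecI) auto
  then have "((r \<cdot>\<^sub>m 1\<^sub>m n) *\<^sub>v x) $ i = (r \<cdot>\<^sub>v unit_vec n i) \<bullet> x" using i by simp
  also have "\<dots> = r * (unit_vec n i \<bullet> x)" using x by (simp add: smult_scalar_prod_distrib)
  also have "\<dots> = r * x $ i" using x i by simp
  finally show "((r \<cdot>\<^sub>m 1\<^sub>m n) *\<^sub>v x) $ i = (r \<cdot>\<^sub>v x) $ i" using x i by simp
qed (use x in simp)

lemma Ev_lin:
  assumes A: "A \<in> carrier_mat n n" and w: "w \<in> carrier_vec n"
  shows "Ev A ([:- r, 1:] * p) w = (A - r \<cdot>\<^sub>m 1\<^sub>m n) *\<^sub>v Ev A p w"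
proof -
  have c1: "Ev A p w \<in> carrier_vec n" using Ev_carrier[OF A w] by auto
  have eq: "[:- r, 1:] * p = Polynomial.smult (- r) p + pCons 0 p" by (simp add: mult_pCons_left)
  have "Ev A ([:- r, 1:] * p) w = (- r) \<cdot>\<^sub>v Ev A p w + (0 \<cdot>\<^sub>v w + A *\<^sub>v Ev A p w)"
    by (simp only: eq Ev_add[OF A w] Ev_smult[OF A w] Ev_pCons[OF A w])
  also have "\<dots> = (A - r \<cdot>\<^sub>m 1\<^sub>m n) *\<^sub>v Ev A p w"
  proof -
    have e1: "(A - r \<cdot>\<^sub>m 1\<^sub>m n) *\<^sub>v Ev A p w = A *\<^sub>v Ev A p w - r \<cdot>\<^sub>v Ev A p w"
      using A c1 by (subst minus_mult_distrib_mat_vec[OF A _ c1]) (auto simp: smult_one_mult_vec)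
    have cA: "A *\<^sub>v Ev A p w \<in> carrier_vec n" using A c1 by simp
    show ?thesis unfolding e1
      by (intro eq_vecI) (use A c1 w cA in auto)
  qed
  finally show ?thesis .
qed

fun Prodv :: "complex mat \<Rightarrow> complex list \<Rightarrow> complex vec \<Rightarrow> complex vec" where
  "Prodv A [] w = w"
| "Prodv A (r # rs) w = (A - r \<cdot>\<^sub>m 1\<^sub>m (dim_row A)) *\<^sub>v Prodv A rs w"

lemma Prodv_carrier:
  assumes A: "A \<in> carrier_mat n n" and w: "w \<in> carrier_vec n"
  shows "Prodv A rs w \<in> carrier_vec n"
proof (induction rs)
  case Nil
  show ?case using w by (simp only: Prodv.simps)
next
  case (Cons a rs)
  have M: "A - a \<cdot>\<^sub>m 1\<^sub>m n \<in> carrier_mat n n"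
    by (rule minus_carrier_mat, rule smult_carrier_mat, rule one_carrier_mat)
  have d: "dim_row A = n" using A by simp
  have "Prodv A (a#rs) w = (A - a \<cdot>\<^sub>m 1\<^sub>m n) *\<^sub>v Prodv A rs w"
    by (simp only: Prodv.simps d)
  then show ?case using mult_mat_vec_carrier[OF M Cons.IH] by (simp only:)
qed

lemma Ev_one:
  assumes A: "A \<in> carrier_mat n n" and w: "w \<in> carrier_vec n"
  shows "Ev A 1 w = w"
proof -
  have "Ev A 1 w = Ev A (pCons 1 0) w" by (simp only: one_pCons)
  also have "\<dots> = 1 \<cdot>\<^sub>v w + A *\<^sub>v Ev A 0 w" by (rule Ev_pCons[OF A w])
  also have "\<dots> = w" using A w by (intro eq_vecI) auto
  finally show ?thesis .
qed

lemma Ev_prod: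
  assumes A: "A \<in> carrier_mat n n" and w: "w \<in> carrier_vec n"
  shows "Ev A (\<Prod>a\<leftarrow>rs. [:- a, 1:]) w = Prodv A rs w"
proof (induction rs)
  case Nil
  show ?case using Ev_one[OF A w] by simp
next
  case (Cons a rs)
  have d: "dim_row A = n" using A by simp
  have "(\<Prod>a\<leftarrow>a # rs. [:- a, 1:]) = [:- a, 1:] * (\<Prod>a\<leftarrow>rs. [:- a, 1:])" by (simp only: list.map prod_list.Cons)
  then have e1: "Ev A (\<Prod>a\<leftarrow>a # rs. [:- a, 1:]) w = (A - a \<cdot>\<^sub>m 1\<^sub>m n) *\<^sub>v Ev A (\<Prod>a\<leftarrow>rs. [:- a, 1:]) w"
    using Ev_lin[OF A w, of a "\<Prod>a\<leftarrow>rs. [:- a, 1:]"] by (simp only:)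
  have e2: "Prodv A (a#rs) w = (A - a \<cdot>\<^sub>m 1\<^sub>m n) *\<^sub>v Prodv A rs w" 
    by (simp only: Prodv.simps d)
  show ?case by (simp only: e1 e2 Cons.IH)
qed


lemma pow_mat_Suc_left:
  assumes A: "(A :: complex mat) \<in> carrier_mat n n"
  shows "A ^\<^sub>m Suc k = A * A ^\<^sub>m k"
proof (induction k)
  case 0
  show ?case using A by simp
next
  case (Suc k)
  have "A ^\<^sub>m Suc (Suc k) = A ^\<^sub>m Suc k * A" by simp
  also have "\<dots> = (A * A ^\<^sub>m k) * A" using Suc by simp
  also have "\<dots> = A * (A ^\<^sub>m k * A)" using A by (simp add: assoc_mult_mat[of _ n n _ n _ n])
  also have "\<dots> = A * A ^\<^sub>m Suc k" by simp
  finally show ?case .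
qed

lemma pow_mult_vec_Suc:
  assumes A: "(A :: complex mat) \<in> carrier_mat n n" and w: "w \<in> carrier_vec n"
  shows "A ^\<^sub>m Suc k *\<^sub>v w = A *\<^sub>v (A ^\<^sub>m k *\<^sub>v w)"
  unfolding pow_mat_Suc_left[OF A] using A w by (simp add: assoc_mult_mat_vec[of _ n n _ n])

lemma Ev_Poly_index:
  assumes A: "A \<in> carrier_mat n n" and w: "w \<in> carrier_vec n" and r: "r < n"
  shows "Ev A (Poly cs) w $ r = (\<Sum>j<length cs. cs ! j * (A ^\<^sub>m j *\<^sub>v w) $ r)"
  using r
proof (induction cs arbitrary: r)
  case Nil
  then show ?case using A by simp
next
  case (Cons c cs)
  let ?E = "Ev A (Poly cs) w"
  have cE: "?E \<in> carrier_vec n" by (rule Ev_carrier[OF A w])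
  have "Ev A (Poly (c # cs)) w = c \<cdot>\<^sub>v w + A *\<^sub>v ?E"
    by (simp only: Poly.simps Ev_pCons[OF A w])
  then have "Ev A (Poly (c # cs)) w $ r = c * w $ r + (A *\<^sub>v ?E) $ r"
    using Cons.prems A w cE by simp
  also have "(A *\<^sub>v ?E) $ r = (\<Sum>k<n. A $$ (r, k) * ?E $ k)"
    using Cons.prems A cE by (simp add: scalar_prod_def lessThan_atLeast0)
  also have "\<dots> = (\<Sum>k<n. A $$ (r, k) * (\<Sum>j<length cs. cs ! j * (A ^\<^sub>m j *\<^sub>v w) $ k))"
    using Cons.IH by simp
  also have "\<dots> = (\<Sum>j<length cs. cs ! j * (\<Sum>k<n. A $$ (r, k) * (A ^\<^sub>m j *\<^sub>v w) $ k))"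
    by (simp add: sum_distrib_left sum.swap[of _ "{..<n}"] mult.left_commute)
  also have "\<dots> = (\<Sum>j<length cs. cs ! j * (A ^\<^sub>m Suc j *\<^sub>v w) $ r)"
  proof (rule sum.cong[OF refl])
    fix j
    have "(A ^\<^sub>m Suc j *\<^sub>v w) $ r = (A *\<^sub>v (A ^\<^sub>m j *\<^sub>v w)) $ r"
      by (simp only: pow_mult_vec_Suc[OF A w])
    also have "\<dots> = (\<Sum>k<n. A $$ (r, k) * (A ^\<^sub>m j *\<^sub>v w) $ k)"
      using Cons.prems A w by (simp add: scalar_prod_def lessThan_atLeast0)
    finally show "cs ! j * (\<Sum>k<n. A $$ (r, k) * (A ^\<^sub>m j *\<^sub>v w) $ k) = cs ! j * (A ^\<^sub>m Suc j *\<^sub>v w) $ r"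
      by simp
  qed
  finally have "Ev A (Poly (c # cs)) w $ r = c * w $ r + (\<Sum>j<length cs. cs ! j * (A ^\<^sub>m Suc j *\<^sub>v w) $ r)" .
  moreover have "(\<Sum>j<length (c#cs). (c#cs) ! j * (A ^\<^sub>m j *\<^sub>v w) $ r)
      = c * w $ r + (\<Sum>j<length cs. cs ! j * (A ^\<^sub>m Suc j *\<^sub>v w) $ r)"
  proof -
    have "(\<Sum>j<length (c#cs). (c#cs) ! j * (A ^\<^sub>m j *\<^sub>v w) $ r)
       = (c#cs) ! 0 * (A ^\<^sub>m 0 *\<^sub>v w) $ r + (\<Sum>j<length cs. (c#cs) ! Suc j * (A ^\<^sub>m Suc j *\<^sub>v w) $ r)"
      by (simp only: list.size add_Suc_right add_0_right sum.lessThan_Suc_shift)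
    moreover have "A ^\<^sub>m 0 *\<^sub>v w = w" using A w by simp
    ultimately show ?thesis by (simp only: nth_Cons_0 nth_Cons_Suc)
  qed
  ultimately show ?case by simp
qed

lemma krylov_dep:
  assumes A: "(A :: complex mat) \<in> carrier_mat n n" and w: "w \<in> carrier_vec n"
  shows "\<exists>cs. length cs = Suc n \<and> (\<exists>j<Suc n. cs ! j \<noteq> 0) \<and>
     (\<forall>r<n. (\<Sum>j<Suc n. cs ! j * (A ^\<^sub>m j *\<^sub>v w) $ r) = 0)"
proof -
  define g where "g = (\<lambda>i. vec (Suc n) (\<lambda>j. (A ^\<^sub>m j *\<^sub>v w) $ i) :: complex vec)"
  define M where "M = mat\<^sub>r (Suc n) (Suc n) (\<lambda>i. if i = n then 0\<^sub>v (Suc n) else g i)"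
  have M: "M \<in> carrier_mat (Suc n) (Suc n)" unfolding M_def by simp
  have "det M = 0" unfolding M_def
    by (rule det_row_0) (auto simp: g_def)
  then obtain x where x: "x \<in> carrier_vec (Suc n)" "x \<noteq> 0\<^sub>v (Suc n)" "M *\<^sub>v x = 0\<^sub>v (Suc n)"
    using det_0_iff_vec_prod_zero_field[OF M] by blast
  define cs where "cs = list_of_vec x"
  have len: "length cs = Suc n" using x unfolding cs_def by simp
  have csj: "cs ! j = x $ j" for j unfolding cs_def by (simp add: list_of_vec_index)
  have nz: "\<exists>j<Suc n. cs ! j \<noteq> 0"
  proof (rule ccontr)
    assume "\<not> ?thesis"
    then have "x = 0\<^sub>v (Suc n)" using x(1) by (intro eq_vecI) (auto simp: csj)
    then show False using x(2) by simp
  qed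
  have "\<forall>r<n. (\<Sum>j<Suc n. cs ! j * (A ^\<^sub>m j *\<^sub>v w) $ r) = 0"
  proof (intro allI impI)
    fix r assume r: "r < n"
    have "(M *\<^sub>v x) $ r = 0" using x(3) r by simp
    moreover have "row M r = g r" unfolding M_def using r by (simp add: g_def)
    ultimately have "g r \<bullet> x = 0" using M r by simp
    then show "(\<Sum>j<Suc n. cs ! j * (A ^\<^sub>m j *\<^sub>v w) $ r) = 0"
      using x(1) by (simp add: g_def scalar_prod_def csj lessThan_atLeast0 mult.commute)
  qed
  then show ?thesis using len nz by blast
qed


lemma Prodv_Cons_expand:
  assumes A: "(A :: complex mat) \<in> carrier_mat n n" and x: "x \<in> carrier_vec n"
  shows "(A - r \<cdot>\<^sub>m 1\<^sub>m n) *\<^sub>v x = A *\<^sub>v x - r \<cdot>\<^sub>v x"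
  using A x by (subst minus_mult_distrib_mat_vec[OF A smult_carrier_mat[OF one_carrier_mat[of n]] x]) (auto simp: smult_one_mult_vec)

lemma ker_prop:
  assumes A: "A \<in> carrier_mat n n" and C: "C \<in> carrier_mat p n" and w: "w \<in> carrier_vec n"
    and K: "\<And>i. i \<le> N \<Longrightarrow> C *\<^sub>v (A ^\<^sub>m i *\<^sub>v w) = 0\<^sub>v p"
  shows "i + length ys \<le> N \<Longrightarrow> C *\<^sub>v (A ^\<^sub>m i *\<^sub>v Prodv A ys w) = 0\<^sub>v p"
proof (induction ys arbitrary: i)
  case Nil
  then show ?case using K by simp
next
  case (Cons r ys)
  let ?x = "Prodv A ys w"
  have cx: "?x \<in> carrier_vec n" by (rule Prodv_carrier[OF A w])
  have d: "dim_row A = n" using A by simp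
  have e: "Prodv A (r # ys) w = A *\<^sub>v ?x - r \<cdot>\<^sub>v ?x"
    using Prodv_Cons_expand[OF A cx, of r] by (simp only: Prodv.simps d)
  have Ai: "A ^\<^sub>m i \<in> carrier_mat n n" using A by simp
  have "A ^\<^sub>m i *\<^sub>v (A *\<^sub>v ?x - r \<cdot>\<^sub>v ?x) = A ^\<^sub>m i *\<^sub>v (A *\<^sub>v ?x) - A ^\<^sub>m i *\<^sub>v (r \<cdot>\<^sub>v ?x)"
    using A cx by (intro mult_minus_distrib_mat_vec[OF Ai]) auto
  also have "A ^\<^sub>m i *\<^sub>v (A *\<^sub>v ?x) = A ^\<^sub>m Suc i *\<^sub>v ?x"
    using A cx by (simp add: assoc_mult_mat_vec[of _ n n _ n])
  also have "A ^\<^sub>m i *\<^sub>v (r \<cdot>\<^sub>v ?x) = r \<cdot>\<^sub>v (A ^\<^sub>m i *\<^sub>v ?x)"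
    by (rule mult_mat_vec[OF Ai cx])
  finally have e2: "A ^\<^sub>m i *\<^sub>v Prodv A (r # ys) w = A ^\<^sub>m Suc i *\<^sub>v ?x - r \<cdot>\<^sub>v (A ^\<^sub>m i *\<^sub>v ?x)"
    unfolding e .
  have c1: "A ^\<^sub>m Suc i *\<^sub>v ?x \<in> carrier_vec n" "A ^\<^sub>m i *\<^sub>v ?x \<in> carrier_vec n"
    by (rule mult_mat_vec_carrier[OF pow_carrier_mat[OF A] cx])+
  have l1: "Suc i + length ys \<le> N" "i + length ys \<le> N" using Cons.prems by simp_all
  have z1: "C *\<^sub>v (A ^\<^sub>m Suc i *\<^sub>v ?x) = 0\<^sub>v p" by (rule Cons.IH[OF l1(1)])
  have z2: "C *\<^sub>v (A ^\<^sub>m i *\<^sub>v ?x) = 0\<^sub>v p" by (rule Cons.IH[OF l1(2)])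
  have "C *\<^sub>v (A ^\<^sub>m Suc i *\<^sub>v ?x - r \<cdot>\<^sub>v (A ^\<^sub>m i *\<^sub>v ?x))
      = C *\<^sub>v (A ^\<^sub>m Suc i *\<^sub>v ?x) - r \<cdot>\<^sub>v (C *\<^sub>v (A ^\<^sub>m i *\<^sub>v ?x))"
    using c1 C by (simp add: mult_minus_distrib_mat_vec[OF C] mult_mat_vec[OF C])
  also have "\<dots> = 0\<^sub>v p" unfolding z1 z2 by (intro eq_vecI) auto
  finally show ?case unfolding e2 .
qed

lemma find_eig:
  assumes "w \<noteq> 0\<^sub>v n" and "Prodv A rs w = 0\<^sub>v n"
  shows "\<exists>r ys. length ys < length rs \<and> Prodv A ys w \<noteq> 0\<^sub>v n \<and> Prodv A (r # ys) w = 0\<^sub>v n"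
  using assms(2)
proof (induction rs)
  case Nil
  then show ?case using assms(1) by simp
next
  case (Cons r rs)
  show ?case
  proof (cases "Prodv A rs w = 0\<^sub>v n")
    case True
    then obtain r' ys where "length ys < length rs" "Prodv A ys w \<noteq> 0\<^sub>v n" "Prodv A (r' # ys) w = 0\<^sub>v n"
      using Cons.IH by blast
    then show ?thesis by (intro exI[of _ r'] exI[of _ ys]) simp
  next
    case False
    then show ?thesis using Cons.prems by (intro exI[of _ r] exI[of _ rs]) simp
  qed
qed

lemma obs_stack_carrier:
  assumes A: "A \<in> carrier_mat n n" and C: "C \<in> carrier_mat p n"
  shows "obs_stack A C k \<in> carrier_mat (Suc k * p) n"
proof (induction k)
  case 0
  then show ?case using C by simp
next
  case (Suc k)
  have "C * A ^\<^sub>m Suc k \<in> carrier_mat p n" by (rule mult_carrier_mat[OF C pow_carrier_mat[OF A]])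
  from carrier_append_rows[OF Suc this] show ?case by (simp add: add.commute)
qed

lemma obs_stack_zero:
  assumes A: "A \<in> carrier_mat n n" and C: "C \<in> carrier_mat p n" and w: "w \<in> carrier_vec n"
    and z: "obs_stack A C k *\<^sub>v w = 0\<^sub>v (Suc k * p)"
  shows "i \<le> k \<Longrightarrow> C *\<^sub>v (A ^\<^sub>m i *\<^sub>v w) = 0\<^sub>v p"
  using z
proof (induction k arbitrary: i)
  case 0
  then show ?case using A w by simp
next
  case (Suc k)
  let ?S = "obs_stack A C k"
  have S: "?S \<in> carrier_mat (Suc k * p) n" by (rule obs_stack_carrier[OF A C])
  have CA: "C * A ^\<^sub>m Suc k \<in> carrier_mat p n" by (rule mult_carrier_mat[OF C pow_carrier_mat[OF A]])
  have "obs_stack A C (Suc k) *\<^sub>v w = (?S *\<^sub>v w) @\<^sub>v ((C * A ^\<^sub>m Suc k) *\<^sub>v w)"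
    using mat_mult_append[OF S CA w] by simp
  moreover have "0\<^sub>v (Suc (Suc k) * p) = 0\<^sub>v (Suc k * p) @\<^sub>v 0\<^sub>v p"
    by (intro eq_vecI) auto
  ultimately have "(?S *\<^sub>v w) @\<^sub>v ((C * A ^\<^sub>m Suc k) *\<^sub>v w) = 0\<^sub>v (Suc k * p) @\<^sub>v 0\<^sub>v p"
    using Suc.prems by simp
  moreover have "?S *\<^sub>v w \<in> carrier_vec (Suc k * p)" by (rule mult_mat_vec_carrier[OF S w])
  ultimately have z1: "?S *\<^sub>v w = 0\<^sub>v (Suc k * p)" and z2: "(C * A ^\<^sub>m Suc k) *\<^sub>v w = 0\<^sub>v p"
    using append_vec_eq[of "?S *\<^sub>v w" "Suc k * p" "0\<^sub>v (Suc k * p)"] by auto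
  show ?case
  proof (cases "i \<le> k")
    case True
    then show ?thesis using Suc.IH z1 by blast
  next
    case False
    then have "i = Suc k" using Suc.prems by simp
    then show ?thesis using z2 assoc_mult_mat_vec[OF C pow_carrier_mat[OF A] w, of "Suc k"] by (simp only:)
  qed
qed


lemma rank_full_inj:
  assumes M: "(M :: complex mat) \<in> carrier_mat r c" and rk: "vec_space.rank r M = c"
    and x: "x \<in> carrier_vec c" and z: "M *\<^sub>v x = 0\<^sub>v r"
  shows "x = 0\<^sub>v c"
proof (rule ccontr)
  assume nz: "x \<noteq> 0\<^sub>v c"
  interpret V: vec_space "TYPE(complex)" r .
  show False
  proof (cases "distinct (cols M)")
    case True
    from V.full_rank_lin_indpt[OF M rk True] V.lin_depI[OF M x nz z True] show False by simp
  next
    case False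
    obtain S where S: "maximal S (\<lambda>T. T \<subseteq> set (cols M) \<and> \<not> V.lin_dep T)"
      using maximal_exists[of "(\<lambda>T. T \<subseteq> set (cols M) \<and> \<not> V.lin_dep T)" "card (set (cols M))" "{}"]
      by (meson List.finite_set card_mono empty_iff empty_subsetI V.finite_lin_indpt2 rev_finite_subset)
    then have "card S \<le> card (set (cols M))" by (simp add: card_mono maximal_def)
    moreover have "card (set (cols M)) \<noteq> length (cols M)" using False card_distinct by blast
    moreover have "card (set (cols M)) \<le> length (cols M)" by (rule card_length)
    moreover have "length (cols M) = c" using M by simp
    ultimately have "card S < c" by linarith
    moreover have "V.rank M = card S" by (rule V.rank_card_indpt[OF M S])
    ultimately show False using rk by simp
  qed
qed

lemma rank_low_ker:
  assumes M: "(M :: complex mat) \<in> carrier_mat r c" and rk: "vec_space.rank r M \<noteq> c"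
  shows "\<exists>x. x \<in> carrier_vec c \<and> x \<noteq> 0\<^sub>v c \<and> M *\<^sub>v x = 0\<^sub>v r"
proof -
  interpret V: vec_space "TYPE(complex)" r .
  show ?thesis
  proof (cases "distinct (cols M)")
    case True
    have "V.lin_dep (set (cols M))"
    proof (rule ccontr)
      assume "\<not> V.lin_dep (set (cols M))"
      then have "V.rank M = c" using V.lin_indpt_full_rank[OF M True] by simp
      with rk show False by simp
    qed
    then obtain x where "x \<in> carrier_vec c" "x \<noteq> 0\<^sub>v c" "M *\<^sub>v x = 0\<^sub>v r"
      using V.lin_depE[OF M _ True] by blast
    then show ?thesis by blast
  next
    case False
    then obtain i j where ij: "i < length (cols M)" "j < length (cols M)" "i \<noteq> j" "cols M ! i = cols M ! j"
      by (auto simp: distinct_conv_nth)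
    then have i: "i < c" "j < c" using M by auto
    have cc: "col M i = col M j" using ij i M by simp
    define x :: "complex vec" where "x = unit_vec c i - unit_vec c j"
    have xc: "x \<in> carrier_vec c" unfolding x_def by simp
    have "x $ i = 1" unfolding x_def using i ij by simp
    then have "x \<noteq> 0\<^sub>v c" using i by auto
    moreover have "M *\<^sub>v x = 0\<^sub>v r"
    proof (rule eq_vecI)
      fix k assume "k < dim_vec (0\<^sub>v r :: complex vec)"
      then have k: "k < r" by simp
      have rk: "row M k \<in> carrier_vec c" using M k by simp
      have "(M *\<^sub>v x) $ k = row M k \<bullet> x" using M k by simp
      also have "\<dots> = row M k \<bullet> unit_vec c i - row M k \<bullet> unit_vec c j"
        unfolding x_def by (rule scalar_prod_minus_distrib[OF rk]) auto
      also have "\<dots> = M $$ (k, i) - M $$ (k, j)" using i k M by simp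
      also have "M $$ (k, i) = col M i $ k" using i k M by simp
      also have "M $$ (k, j) = col M j $ k" using i k M by simp
      finally show "(M *\<^sub>v x) $ k = 0\<^sub>v r $ k" using cc k by simp
    qed (use M in simp)
    ultimately show ?thesis using xc by blast
  qed
qed

lemma spectrum_memI:
  assumes A: "(A :: complex mat) \<in> carrier_mat n n" and v: "v \<in> carrier_vec n" "v \<noteq> 0\<^sub>v n"
    and e: "A *\<^sub>v v = lam \<cdot>\<^sub>v v"
  shows "lam \<in> spectrum A"
  unfolding spectrum_def eigenvalue_def eigenvector_def using A v e by auto


lemma smult_vec_zero_cancel:
  assumes k: "(k :: complex) \<noteq> 0" and x: "x \<in> carrier_vec n" and z: "k \<cdot>\<^sub>v x = 0\<^sub>v n"
  shows "x = 0\<^sub>v n"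
proof (rule eq_vecI)
  fix i assume "i < dim_vec (0\<^sub>v n :: complex vec)"
  then have i: "i < n" by simp
  have "(k \<cdot>\<^sub>v x) $ i = 0" using z i by simp
  then have "k * x $ i = 0" using x i by simp
  then show "x $ i = 0\<^sub>v n $ i" using k i by simp
qed (use x in simp)

lemma minus_vec_zero_eq:
  assumes a: "(a :: complex vec) \<in> carrier_vec n" and b: "b \<in> carrier_vec n" and z: "a - b = 0\<^sub>v n"
  shows "a = b"
proof (rule eq_vecI)
  fix i assume "i < dim_vec b"
  then have i: "i < n" using b by simp
  have "(a - b) $ i = 0" using z i by simp
  then show "a $ i = b $ i" using a b i by simp
qed (use a b in simp)

lemma vec_comb1:
  assumes a: "(a :: complex vec) \<in> carrier_vec n" and b: "b \<in> carrier_vec n" and x: "x \<in> carrier_vec n"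
    and e: "a - b = l \<cdot>\<^sub>v x"
  shows "(a - l \<cdot>\<^sub>v x) + (-1) \<cdot>\<^sub>v b = 0\<^sub>v n"
proof (rule eq_vecI)
  fix i assume "i < dim_vec (0\<^sub>v n :: complex vec)"
  then have i: "i < n" by simp
  have "(a - b) $ i = (l \<cdot>\<^sub>v x) $ i" using e by simp
  then have "a $ i - b $ i = l * x $ i" using a b x i by simp
  then have "a $ i - l * x $ i = b $ i" by (simp add: diff_eq_eq eq_diff_eq)
  then show "((a - l \<cdot>\<^sub>v x) + (-1) \<cdot>\<^sub>v b) $ i = 0\<^sub>v n $ i" using a b x i by simp
qed (use a b x in simp)

lemma vec_comb2:
  assumes a: "(a :: complex vec) \<in> carrier_vec n" and b: "b \<in> carrier_vec n"
    and e: "a - b = 0\<^sub>v n"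
  shows "a + (-1) \<cdot>\<^sub>v b = 0\<^sub>v n"
proof (rule eq_vecI)
  fix i assume "i < dim_vec (0\<^sub>v n :: complex vec)"
  then have i: "i < n" by simp
  have "(a - b) $ i = 0" using e i by simp
  then have "a $ i - b $ i = 0" using a b i by simp
  then show "(a + (-1) \<cdot>\<^sub>v b) $ i = 0\<^sub>v n $ i" using a b i by simp
qed (use a b in simp)

theorem theorem4:
  fixes A B C D F H Bh Dh :: "complex mat" and n m p \<nu> :: nat
  assumes "A \<in> carrier_mat n n" and "B \<in> carrier_mat n m" and "C \<in> carrier_mat p n"
    and "D \<in> carrier_mat p m" and "F \<in> carrier_mat \<nu> \<nu>"
    and "spectrum A \<inter> spectrum F = {}"
    and "H \<in> carrier_mat m \<nu>" and "observable F H"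
    and "Bh \<in> carrier_mat \<nu> m" and "Dh \<in> carrier_mat p m"
    and "spectrum (F - Bh * H) \<inter> spectrum F = {}"
    and "\<forall>lam\<in>spectrum (F - Bh * H).
           full_col_rank (four_block_mat (F - lam \<cdot>\<^sub>m 1\<^sub>m \<nu>) Bh (primal_ssc A B C D F H) Dh)"
  shows "observable (F - Bh * H) (primal_ssc A B C D F H - Dh * H)"
proof -
  note Fc = assms(5) and Hc = assms(7) and Bhc = assms(9) and Dhc = assms(10) and Dc = assms(4)
  note FCR = assms(12)
  define Ah where "Ah = F - Bh * H"
  define Cp where "Cp = primal_ssc A B C D F H"
  define Ch where "Ch = Cp - Dh * H"
  have BH: "Bh * H \<in> carrier_mat \<nu> \<nu>" using Bhc Hc by simp
  have DhH: "Dh * H \<in> carrier_mat p \<nu>" using Dhc Hc by simp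
  have Ahc: "Ah \<in> carrier_mat \<nu> \<nu>" unfolding Ah_def by (rule minus_carrier_mat[OF BH])
  have Cpc: "Cp \<in> carrier_mat p \<nu>"
    unfolding Cp_def primal_ssc_def carrier_mat_def plus_mat_def using Dc Hc by simp
  have Chc: "Ch \<in> carrier_mat p \<nu>" unfolding Ch_def by (rule minus_carrier_mat[OF DhH])
  define Ob where "Ob = obs_matrix Ah Ch"
  have dA: "dim_row Ah = \<nu>" using Ahc by simp
  have Oc: "Ob \<in> carrier_mat (Suc (\<nu> - 1) * p) \<nu>"
    unfolding Ob_def obs_matrix_def dA by (rule obs_stack_carrier[OF Ahc Chc])
  have "vec_space.rank (dim_row Ob) Ob = \<nu>"
  proof (rule ccontr)
    assume "vec_space.rank (dim_row Ob) Ob \<noteq> \<nu>"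
    then have "vec_space.rank (Suc (\<nu> - 1) * p) Ob \<noteq> \<nu>" using Oc by simp
    from rank_low_ker[OF Oc this] obtain v where
      v: "v \<in> carrier_vec \<nu>" "v \<noteq> 0\<^sub>v \<nu>" "Ob *\<^sub>v v = 0\<^sub>v (Suc (\<nu> - 1) * p)" by blast
    have ker: "\<And>i. i \<le> \<nu> - 1 \<Longrightarrow> Ch *\<^sub>v (Ah ^\<^sub>m i *\<^sub>v v) = 0\<^sub>v p"
      using obs_stack_zero[OF Ahc Chc v(1)] v(3) unfolding Ob_def obs_matrix_def dA by blast
    obtain cs where cs: "length cs = Suc \<nu>" "\<exists>j<Suc \<nu>. cs ! j \<noteq> 0"
      "\<forall>r<\<nu>. (\<Sum>j<Suc \<nu>. cs ! j * (Ah ^\<^sub>m j *\<^sub>v v) $ r) = 0"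
      using krylov_dep[OF Ahc v(1)] by blast
    define q where "q = Poly cs"
    have Evq: "Ev Ah q v = 0\<^sub>v \<nu>"
    proof (rule eq_vecI)
      fix r assume "r < dim_vec (0\<^sub>v \<nu> :: complex vec)"
      then have r: "r < \<nu>" by simp
      show "Ev Ah q v $ r = 0\<^sub>v \<nu> $ r"
        unfolding q_def Ev_Poly_index[OF Ahc v(1) r] using cs(1) cs(3) r by simp
    qed (use Ev_carrier[OF Ahc v(1)] in simp)
    have q0: "q \<noteq> 0"
    proof
      assume "q = 0"
      then obtain k where "cs = replicate k 0" unfolding q_def Poly_eq_0 by blast
      then show False using cs(1) cs(2) by (metis length_replicate nth_replicate)
    qed
    have dq: "degree q \<le> \<nu>"
    proof (rule degree_le)
      show "\<forall>i>\<nu>. coeff q i = 0" unfolding q_def using cs(1) by (auto simp: nth_default_def)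
    qed
    obtain as where fa: "Polynomial.smult (coeff q (degree q)) (\<Prod>a\<leftarrow>as. [:- a, 1:]) = q"
      and las: "length as = degree q"
      using fundamental_theorem_algebra_factorized[of q] by blast
    have lc: "coeff q (degree q) \<noteq> 0" using q0 by simp
    have "Ev Ah (Polynomial.smult (coeff q (degree q)) (\<Prod>a\<leftarrow>as. [:- a, 1:])) v = 0\<^sub>v \<nu>"
      using Evq fa by (simp only:)
    then have "coeff q (degree q) \<cdot>\<^sub>v Prodv Ah as v = 0\<^sub>v \<nu>"
      by (simp only: Ev_smult[OF Ahc v(1)] Ev_prod[OF Ahc v(1)])
    moreover have cP: "Prodv Ah as v \<in> carrier_vec \<nu>" by (rule Prodv_carrier[OF Ahc v(1)])
    ultimately have P0: "Prodv Ah as v = 0\<^sub>v \<nu>"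
      using smult_vec_zero_cancel[OF lc] by blast
    obtain lam ys where ys: "length ys < length as" "Prodv Ah ys v \<noteq> 0\<^sub>v \<nu>"
      "Prodv Ah (lam # ys) v = 0\<^sub>v \<nu>"
      using find_eig[OF v(2) P0] by blast
    define u where "u = Prodv Ah ys v"
    have uc: "u \<in> carrier_vec \<nu>" unfolding u_def by (rule Prodv_carrier[OF Ahc v(1)])
    have u0: "u \<noteq> 0\<^sub>v \<nu>" using ys(2) unfolding u_def .
    have "Ah *\<^sub>v u - lam \<cdot>\<^sub>v u = 0\<^sub>v \<nu>"
      using ys(3) Prodv_Cons_expand[OF Ahc uc, of lam] unfolding u_def by (simp add: dA)
    then have eig: "Ah *\<^sub>v u = lam \<cdot>\<^sub>v u"
      using minus_vec_zero_eq[of _ \<nu>] Ahc uc by simp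
    have Chu: "Ch *\<^sub>v u = 0\<^sub>v p"
      using ker_prop[OF Ahc Chc v(1) ker, where i=0 and ys=ys] ys(1) las dq Ahc uc unfolding u_def by simp
    have "lam \<in> spectrum Ah" by (rule spectrum_memI[OF Ahc uc u0 eig])
    then have fcr: "full_col_rank (four_block_mat (F - lam \<cdot>\<^sub>m 1\<^sub>m \<nu>) Bh Cp Dh)"
      using FCR unfolding Ah_def Cp_def by blast
    define M where "M = four_block_mat (F - lam \<cdot>\<^sub>m 1\<^sub>m \<nu>) Bh Cp Dh"
    have F1: "F - lam \<cdot>\<^sub>m 1\<^sub>m \<nu> \<in> carrier_mat \<nu> \<nu>"
      by (rule minus_carrier_mat, rule smult_carrier_mat, rule one_carrier_mat)
    have Mc: "M \<in> carrier_mat (\<nu> + p) (\<nu> + m)"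
      unfolding M_def by (rule four_block_carrier_mat[OF F1 Dhc])
    have rkM: "vec_space.rank (\<nu> + p) M = \<nu> + m"
      using fcr Mc unfolding full_col_rank_def M_def[symmetric] by simp
    define y where "y = H *\<^sub>v u"
    have yc: "y \<in> carrier_vec m" unfolding y_def using Hc uc by simp
    define z where "z = u @\<^sub>v ((-1) \<cdot>\<^sub>v y)"
    have zc: "z \<in> carrier_vec (\<nu> + m)" unfolding z_def using uc yc by simp
    have Mz: "M *\<^sub>v z = ((F - lam \<cdot>\<^sub>m 1\<^sub>m \<nu>) *\<^sub>v u + Bh *\<^sub>v ((-1) \<cdot>\<^sub>v y)) @\<^sub>v (Cp *\<^sub>v u + Dh *\<^sub>v ((-1) \<cdot>\<^sub>v y))"
      unfolding M_def z_def
      by (rule four_block_mat_mult_vec[OF F1 Bhc Cpc Dhc uc]) (use yc in simp)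
    have e1: "(F - lam \<cdot>\<^sub>m 1\<^sub>m \<nu>) *\<^sub>v u = F *\<^sub>v u - lam \<cdot>\<^sub>v u"
      by (rule Prodv_Cons_expand[OF Fc uc])
    have e2: "Bh *\<^sub>v ((-1) \<cdot>\<^sub>v y) = (-1) \<cdot>\<^sub>v (Bh *\<^sub>v y)" by (rule mult_mat_vec[OF Bhc yc])
    have e3: "Dh *\<^sub>v ((-1) \<cdot>\<^sub>v y) = (-1) \<cdot>\<^sub>v (Dh *\<^sub>v y)" by (rule mult_mat_vec[OF Dhc yc])
    have e4: "Ah *\<^sub>v u = F *\<^sub>v u - Bh *\<^sub>v y"
      unfolding Ah_def y_def using minus_mult_distrib_mat_vec[OF Fc BH uc]
        assoc_mult_mat_vec[OF Bhc Hc uc] by simp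
    have e5: "Ch *\<^sub>v u = Cp *\<^sub>v u - Dh *\<^sub>v y"
      unfolding Ch_def y_def using minus_mult_distrib_mat_vec[OF Cpc DhH uc]
        assoc_mult_mat_vec[OF Dhc Hc uc] by simp
    have c1: "F *\<^sub>v u \<in> carrier_vec \<nu>" "Bh *\<^sub>v y \<in> carrier_vec \<nu>" "Cp *\<^sub>v u \<in> carrier_vec p"
      "Dh *\<^sub>v y \<in> carrier_vec p"
      using Fc uc Bhc yc Cpc Dhc by auto
    have top: "(F - lam \<cdot>\<^sub>m 1\<^sub>m \<nu>) *\<^sub>v u + Bh *\<^sub>v ((-1) \<cdot>\<^sub>v y) = 0\<^sub>v \<nu>"
      unfolding e1 e2 by (rule vec_comb1[OF c1(1) c1(2) uc]) (use eig e4 in simp)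
    have bot: "Cp *\<^sub>v u + Dh *\<^sub>v ((-1) \<cdot>\<^sub>v y) = 0\<^sub>v p"
      unfolding e3 by (rule vec_comb2[OF c1(3) c1(4)]) (use Chu e5 in simp)
    have "M *\<^sub>v z = 0\<^sub>v (\<nu> + p)" unfolding Mz top bot by (intro eq_vecI) auto
    from rank_full_inj[OF Mc rkM zc this] have "z = 0\<^sub>v (\<nu> + m)" .
    moreover have "0\<^sub>v (\<nu> + m) = 0\<^sub>v \<nu> @\<^sub>v (0\<^sub>v m :: complex vec)" by (intro eq_vecI) auto
    ultimately have "u = 0\<^sub>v \<nu>" unfolding z_def using append_vec_eq[OF uc, of "0\<^sub>v \<nu>"] by simp
    with u0 show False by simp
  qed
  then show ?thesis
    unfolding observable_def Ah_def[symmetric] Cp_def[symmetric] Ch_def[symmetric] Ob_def[symmetric]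
    using Ahc Chc dA by simp
qed

end
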